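(* Let $\psi:\Omega_n\to\mathbb{R}$, and define $|\!|\!|x|\!|\!|_\psi:=\big(\sum_{i=1}^n\|x_i\|\big)\,\psi\big(\frac{\|x_1\|}{\sum_{i}\|x_i\|},\ldots,\frac{\|x_n\|}{\sum_{i}\|x_i\|}\big)$ for $x=(x_1,\ldots,x_n)\in X^n\setminus\{0_{X^n}\}$ and $|\!|\!|0_{X^n}|\!|\!|_\psi:=0$. Then $|\!|\!|\cdot|\!|\!|_\psi\in \mathbf{N}^{\rm sc}_{X^n}$ if and only if $\psi\in \mathbf{\Psi}^{\rm sc}_{n}$ and $\|\cdot\|$ is strictly convex.
   Context: Let $(X,\|\cdot\|)$ be a normed vector space, $n\ge2$. $\mathbf{N}^{\rm sc}_{X^n}$ is the family of strictly convex norms $|\!|\!|\cdot|\!|\!|$ on $X^n$ satisfying (A1) $|\!|\!|(x_1,\ldots,x_n)|\!|\!|=|\!|\!|(\pm x_1,\ldots,\pm x_n)|\!|\!|$ for all $x\in X^n$ and all sign choices, and (A2) $|\!|\!|(0_X,\ldots,0_X,v,0_X,\ldots,0_X)|\!|\!|=\|v\|$ for all $v\in X$ in any $i$th position. $\Omega_n:=\{t\in\mathbb{R}^n\mid t_i\ge0,\ \sum_i t_i=1\}$, $\Omega_n^\circ:=\{t\in\Omega_n\mid t_i<1\ \forall i\}$. $\mathbf{\Psi}^{\rm sc}_n$ is the class of strictly convex continuous $\psi:\Omega_n\to\mathbb{R}$ with (B1) $\psi(\mathbf{e}_i)=1$ for all standard unit vectors $\mathbf{e}_i$ and (B2) $\psi(t)\ge(1-t_i)\psi\big(\frac{t_1}{1-t_i},\ldots,\frac{t_{i-1}}{1-t_i},0,\frac{t_{i+1}}{1-t_i},\ldots,\frac{t_n}{1-t_i}\big)$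 for all $t\in\Omega_n^\circ$, $i=1,\ldots,n$. *)

theory Defs
  imports "HOL-Analysis.Analysis"
begin

text \<open>X^n is rendered as 'a ^ 'n with 'n a finite index type, n = CARD('n).\<close>

definition is_norm :: "('v::real_vector \<Rightarrow> real) \<Rightarrow> bool" where
  "is_norm N \<longleftrightarrow> (\<forall>x. N x = 0 \<longleftrightarrow> x = 0) \<and> (\<forall>c x. N (c *\<^sub>R x) = \<bar>c\<bar> * N x)
     \<and> (\<forall>x y. N (x + y) \<le> N x + N y)"

definition strictly_convex_norm :: "('v::real_vector \<Rightarrow> real) \<Rightarrow> bool" where
  "strictly_convex_norm N \<longleftrightarrow>
     (\<forall>x y. N x = 1 \<and> N y = 1 \<and> x \<noteq> y \<longrightarrow> N ((1/2) *\<^sub>R (x + y)) < 1)"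

definition N_sc :: "(('a::real_normed_vector) ^ 'n \<Rightarrow> real) set" where
  "N_sc = {N. is_norm N \<and> strictly_convex_norm N
       \<and> (\<forall>x (\<epsilon>::'n \<Rightarrow> real). (\<forall>i. \<epsilon> i = 1 \<or> \<epsilon> i = -1) \<longrightarrow>
              N (\<chi> i. \<epsilon> i *\<^sub>R (x $ i)) = N x)
       \<and> (\<forall>i (v::'a). N (\<chi> j. if j = i then v else 0) = norm v)}"

definition Omega :: "(real ^ 'n) set" where
  "Omega = {t. (\<forall>i. t $ i \<ge> 0) \<and> (\<Sum>i\<in>UNIV. t $ i) = 1}"

definition Omega_int :: "(real ^ 'n) set" where
  "Omega_int = {t \<in> Omega. \<forall>i. t $ i < 1}"

definition strictly_convex_on_fn :: "(real ^ 'n) set \<Rightarrow> (real ^ 'n \<Rightarrow> real) \<Rightarrow> bool" where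
  "strictly_convex_on_fn S f \<longleftrightarrow>
     (\<forall>s\<in>S. \<forall>t\<in>S. \<forall>l::real. s \<noteq> t \<and> 0 < l \<and> l < 1 \<longrightarrow>
        f (l *\<^sub>R s + (1 - l) *\<^sub>R t) < l * f s + (1 - l) * f t)"

definition Psi_sc :: "(real ^ 'n \<Rightarrow> real) set" where
  "Psi_sc = {\<psi>. continuous_on Omega \<psi> \<and> strictly_convex_on_fn Omega \<psi>
      \<and> (\<forall>i. \<psi> (\<chi> j. if j = i then 1 else 0) = 1)
      \<and> (\<forall>t\<in>Omega_int. \<forall>i. \<psi> t \<ge> (1 - t $ i) *
              \<psi> (\<chi> j. if j = i then 0 else t $ j / (1 - t $ i)))}"

definition psi_norm :: "(real ^ 'n \<Rightarrow> real) \<Rightarrow> ('a::real_normed_vector) ^ 'n \<Rightarrow> real" where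
  "psi_norm \<psi> x = (if x = 0 then 0 else
     (\<Sum>i\<in>UNIV. norm (x $ i)) * \<psi> (\<chi> i. norm (x $ i) / (\<Sum>j\<in>UNIV. norm (x $ j))))"

end

theory Submission
  imports Defs
begin

definition phi :: "(real ^ 'n \<Rightarrow> real) \<Rightarrow> real ^ 'n \<Rightarrow> real" where
  "phi \<psi> a = (if a = 0 then 0 else (\<Sum>i\<in>UNIV. a $ i) * \<psi> (\<chi> i. a $ i / (\<Sum>j\<in>UNIV. a $ j)))"

definition nv :: "('a::real_normed_vector) ^ 'n \<Rightarrow> real ^ 'n" where
  "nv x = (\<chi> i. norm (x $ i))"

definition upd :: "real ^ 'n \<Rightarrow> 'n \<Rightarrow> real \<Rightarrow> real ^ 'n" where
  "upd a i s = (\<chi> j. if j = i then s else a $ j)"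

definition Pos :: "(real ^ 'n) set" where
  "Pos = {a. \<forall>i. a $ i \<ge> 0}"

definition nrm :: "real ^ 'n \<Rightarrow> real ^ 'n" where
  "nrm a = (\<chi> i. a $ i / (\<Sum>j\<in>UNIV. a $ j))"

lemma phi_nrm: "phi \<psi> a = (if a = 0 then 0 else (\<Sum>i\<in>UNIV. a $ i) * \<psi> (nrm a))"
  by (simp add: phi_def nrm_def)

lemma nv_zero_iff: "nv x = 0 \<longleftrightarrow> x = 0"
  by (simp add: nv_def vec_eq_iff)

lemma psi_norm_phi: "psi_norm \<psi> x = phi \<psi> (nv x)"
  unfolding psi_norm_def phi_def nv_zero_iff by (simp add: nv_def)

lemma nv_Pos: "nv x \<in> Pos"
  by (simp add: nv_def Pos_def)

lemma Pos_ne0_sum_pos: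
  assumes "a \<in> Pos" "a \<noteq> 0" shows "(\<Sum>j\<in>UNIV. a $ j) > 0"
proof -
  obtain i where "a $ i \<noteq> 0" using assms(2) by (auto simp: vec_eq_iff)
  hence "a $ i > 0" using assms(1) by (auto simp: Pos_def less_le)
  moreover have "a $ i \<le> (\<Sum>j\<in>UNIV. a $ j)"
    by (rule member_le_sum) (use assms(1) in \<open>auto simp: Pos_def\<close>)
  ultimately show ?thesis by linarith
qed

lemma sum_ge_comp:
  assumes "a \<in> Pos" shows "a $ k \<le> (\<Sum>j\<in>UNIV. a $ j)"
  by (rule member_le_sum) (use assms in \<open>auto simp: Pos_def\<close>)

lemma nrm_Omega:
  assumes "a \<in> Pos" "a \<noteq> 0" shows "nrm a \<in> Omega"
proof -
  have S: "(\<Sum>j\<in>UNIV. a $ j) > 0" using Pos_ne0_sum_pos[OF assms] .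
  have "(\<Sum>i\<in>UNIV. a $ i / (\<Sum>j\<in>UNIV. a $ j)) = 1"
    using S by (simp add: sum_divide_distrib[symmetric])
  thus ?thesis using assms S by (auto simp: Omega_def nrm_def Pos_def)
qed

lemma nrm_scale: "c > 0 \<Longrightarrow> nrm (c *\<^sub>R a) = nrm a"
  by (simp add: nrm_def vec_eq_iff sum_distrib_left[symmetric])

lemma Pos_add: "a \<in> Pos \<Longrightarrow> b \<in> Pos \<Longrightarrow> a + b \<in> Pos"
  by (auto simp: Pos_def)
lemma Pos_scale: "a \<in> Pos \<Longrightarrow> c \<ge> 0 \<Longrightarrow> c *\<^sub>R a \<in> Pos"
  by (auto simp: Pos_def)

lemma phi_0[simp]: "phi \<psi> 0 = 0" by (simp add: phi_def)

lemma phi_homog: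
  assumes "c \<ge> 0" shows "phi \<psi> (c *\<^sub>R a) = c * phi \<psi> a"
proof (cases "c = 0 \<or> a = 0")
  case True then show ?thesis by auto
next
  case False
  hence "c > 0" "a \<noteq> 0" using assms by auto
  have "nrm (c *\<^sub>R a) = nrm a" using nrm_scale[OF \<open>c>0\<close>] by blast
  thus ?thesis unfolding phi_nrm using \<open>c>0\<close> \<open>a\<noteq>0\<close>
    by (simp add: sum_distrib_left[symmetric])
qed


context
  fixes \<psi> :: "real ^ 'n \<Rightarrow> real"
  assumes Psi: "\<psi> \<in> Psi_sc"
begin

lemma psc: "strictly_convex_on_fn Omega \<psi>" using Psi by (simp add: Psi_sc_def)

lemma phi_add_strict:
  assumes "a \<in> Pos" "b \<in> Pos" "a \<noteq> 0" "b \<noteq> 0"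
  shows "phi \<psi> (a+b) \<le> phi \<psi> a + phi \<psi> b \<and>
         (nrm a \<noteq> nrm b \<longrightarrow> phi \<psi> (a+b) < phi \<psi> a + phi \<psi> b)"
proof -
  define A where "A = (\<Sum>j\<in>UNIV. a $ j)"
  define B where "B = (\<Sum>j\<in>UNIV. b $ j)"
  have A: "A > 0" unfolding A_def using Pos_ne0_sum_pos assms by blast
  have B: "B > 0" unfolding B_def using Pos_ne0_sum_pos assms by blast
  have sab: "(\<Sum>j\<in>UNIV. (a+b) $ j) = A + B" by (simp add: A_def B_def sum.distrib)
  have ab: "a + b \<noteq> 0" proof
    assume "a + b = 0" then have "(\<Sum>j\<in>UNIV. (a+b) $ j) = 0" by simp
    with sab A B show False by simp
  qed
  define l where "l = A / (A+B)"
  have l: "0 < l" "l < 1" using A B by (auto simp: l_def field_simps)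
  have l1: "1 - l = B / (A+B)" using A B by (simp add: l_def field_simps)
  have key: "nrm (a+b) = l *\<^sub>R nrm a + (1-l) *\<^sub>R nrm b"
  proof -
    have s2: "(\<Sum>x\<in>UNIV. a $ x + b $ x) = A + B" by (simp add: A_def B_def sum.distrib)
    have t1: "l*x/A = x/(A+B)" for x using A B by (simp add: l_def)
    have t2: "(1-l)*x/B = x/(A+B)" for x using A B by (simp add: l1)
    show ?thesis unfolding vec_eq_iff nrm_def
      by (simp add: s2 A_def[symmetric] B_def[symmetric] t1 t2 add_divide_distrib)
  qed
  have pab: "phi \<psi> (a+b) = (A+B) * \<psi> (nrm (a+b))" using ab sab by (simp add: phi_nrm)
  have pa: "phi \<psi> a = A * \<psi> (nrm a)" using assms by (simp add: phi_nrm A_def)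
  have pb: "phi \<psi> b = B * \<psi> (nrm b)" using assms by (simp add: phi_nrm B_def)
  show ?thesis
  proof (cases "nrm a = nrm b")
    case True
    hence "nrm (a+b) = nrm a" unfolding key by (simp add: scaleR_left_distrib[symmetric])
    thus ?thesis using pab pa pb True by (simp add: distrib_right)
  next
    case False
    have "\<psi> (nrm (a+b)) < l * \<psi> (nrm a) + (1-l) * \<psi> (nrm b)"
      using psc False l nrm_Omega assms unfolding strictly_convex_on_fn_def key by blast
    hence "(A+B) * \<psi> (nrm (a+b)) < (A+B) * (l * \<psi> (nrm a) + (1-l) * \<psi> (nrm b))"
      using A B by simp
    also have "\<dots> = phi \<psi> a + phi \<psi> b"
    proof -
      have hA: "(A+B)*l = A" using A B by (simp add: l_def)
      have hB: "(A+B)*(1-l) = B" using A B by (simp add: l1)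
      show ?thesis by (simp only: distrib_left mult.assoc[symmetric] hA hB pa pb)
    qed
    finally show ?thesis using pab False by simp
  qed
qed

lemma phi_add:
  assumes "a \<in> Pos" "b \<in> Pos" shows "phi \<psi> (a+b) \<le> phi \<psi> a + phi \<psi> b"
  using phi_add_strict[OF assms] by (cases "a = 0"; cases "b = 0") auto

lemma phi_convex:
  assumes "p \<in> Pos" "q \<in> Pos" "0 \<le> l" "l \<le> 1"
  shows "phi \<psi> (l *\<^sub>R p + (1-l) *\<^sub>R q) \<le> l * phi \<psi> p + (1-l) * phi \<psi> q"
  using phi_add[OF Pos_scale[OF assms(1,3)] Pos_scale[OF assms(2)]] assms
  by (simp add: phi_homog)

lemma phi_mid_strict:
  assumes "p \<in> Pos" "q \<in> Pos" "p \<noteq> 0" "q \<noteq> 0" "nrm p \<noteq> nrm q"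
  shows "phi \<psi> ((1/2) *\<^sub>R p + (1/2) *\<^sub>R q) < (1/2) * phi \<psi> p + (1/2) * phi \<psi> q"
proof -
  have "nrm ((1/2) *\<^sub>R p) = nrm p" "nrm ((1/2) *\<^sub>R q) = nrm q" by (auto intro: nrm_scale)
  thus ?thesis
    using phi_add_strict[OF Pos_scale[OF assms(1), of "1/2"] Pos_scale[OF assms(2), of "1/2"]] assms
    by (simp add: phi_homog)
qed


end

lemma upd_Pos: "a \<in> Pos \<Longrightarrow> s \<ge> 0 \<Longrightarrow> upd a i s \<in> Pos"
  by (auto simp: Pos_def upd_def)

lemma upd_comp: "upd a i s $ k = (if k = i then s else a $ k)"
  by (simp add: upd_def)

lemma sum_upd: "(\<Sum>k\<in>UNIV. upd a i s $ k) = s + (\<Sum>k\<in>UNIV-{i}. a $ k)"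
proof -
  have "(\<Sum>k\<in>UNIV. upd a i s $ k) = upd a i s $ i + (\<Sum>k\<in>UNIV-{i}. upd a i s $ k)"
    by (rule sum.remove) auto
  also have "(\<Sum>k\<in>UNIV-{i}. upd a i s $ k) = (\<Sum>k\<in>UNIV-{i}. a $ k)"
    by (rule sum.cong) (auto simp: upd_comp)
  finally show ?thesis by (simp add: upd_comp)
qed

lemma sum_two_le:
  assumes "a \<in> Pos" "k \<noteq> m" shows "a $ k + a $ m \<le> (\<Sum>j\<in>UNIV. a $ j)"
proof -
  have "(\<Sum>j\<in>UNIV. a $ j) = a $ k + (\<Sum>j\<in>UNIV-{k}. a $ j)"
    by (rule sum.remove) auto
  moreover have "a $ m \<le> (\<Sum>j\<in>UNIV-{k}. a $ j)"
    by (rule member_le_sum) (use assms in \<open>auto simp: Pos_def\<close>)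
  ultimately show ?thesis by linarith
qed

context
  fixes \<psi> :: "real ^ 'n \<Rightarrow> real"
  assumes Psi: "\<psi> \<in> Psi_sc"
begin

lemma phi_vertex:
  assumes "c \<ge> 0" shows "phi \<psi> (upd 0 i c) = c"
proof -
  define e where "e = (\<chi> j. if j = i then (1::real) else 0)"
  have "upd 0 i c = c *\<^sub>R e" by (simp add: e_def upd_def vec_eq_iff)
  moreover have "e \<noteq> 0" by (simp add: e_def vec_eq_iff)
  moreover have "(\<Sum>j\<in>UNIV. e $ j) = 1" by (simp add: e_def)
  moreover have "nrm e = e" using \<open>(\<Sum>j\<in>UNIV. e $ j) = 1\<close> by (simp add: nrm_def)
  moreover have "\<psi> e = 1" using Psi by (simp add: Psi_sc_def e_def)
  ultimately have "phi \<psi> e = 1" by (simp add: phi_nrm)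
  thus ?thesis using assms \<open>upd 0 i c = c *\<^sub>R e\<close> by (simp add: phi_homog)
qed

lemma B2le:
  assumes a: "a \<in> Pos" and u: "u > 0" and j: "j \<noteq> i" "a $ j > 0"
  shows "phi \<psi> (upd a i 0) \<le> phi \<psi> (upd a i u)"
proof -
  define q where "q = upd a i u"
  define q0 where "q0 = upd a i 0"
  define R where "R = (\<Sum>k\<in>UNIV-{i}. a $ k)"
  define S where "S = (\<Sum>k\<in>UNIV. q $ k)"
  have S: "S = u + R" by (simp add: S_def R_def q_def sum_upd)
  have R0: "(\<Sum>k\<in>UNIV. q0 $ k) = R" by (simp add: R_def q0_def sum_upd)
  have qk: "q $ k = (if k = i then u else a $ k)" for k by (simp add: q_def upd_comp)
  have q0k: "q0 $ k = (if k = i then 0 else a $ k)" for k by (simp add: q0_def upd_comp)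
  have qP: "q \<in> Pos" "q0 \<in> Pos" unfolding q_def q0_def using a u by (simp_all add: upd_Pos)
  have q0j: "q0 $ j = a $ j" using j(1) by (simp add: q0k)
  have "q0 $ j \<le> R" using sum_ge_comp[OF qP(2), of j] R0 by simp
  hence Rpos: "R > 0" using j(2) q0j by linarith
  have Spos: "S > 0" using S Rpos u by simp
  have q0ne: "q0 \<noteq> 0" using q0j j(2) by (metis less_irrefl zero_index)
  have qj: "q $ j = a $ j" using j(1) by (simp add: qk)
  have qne: "q \<noteq> 0" using qj j(2) by (metis less_irrefl zero_index)
  define t where "t = nrm q"
  have tO: "t \<in> Omega" using nrm_Omega[OF qP(1) qne] by (simp add: t_def)
  have tk: "t $ k = q $ k / S" for k by (simp add: t_def nrm_def S_def)
  have n0k: "nrm q0 $ k = q0 $ k / R" for k by (simp add: nrm_def R0)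
  have tlt: "t $ k < 1" for k
  proof -
    define m where "m = (if k = i then j else i)"
    have "k \<noteq> m" using j by (auto simp: m_def)
    have "q $ m > 0" using j u by (auto simp: m_def qk)
    moreover have "q $ k + q $ m \<le> S" using sum_two_le[OF qP(1) \<open>k\<noteq>m\<close>] by (simp add: S_def)
    ultimately have "q $ k < S" by linarith
    thus ?thesis using Spos by (simp add: tk)
  qed
  have tI: "t \<in> Omega_int" using tO tlt by (simp add: Omega_int_def)
  have B2: "\<psi> t \<ge> (1 - t $ i) * \<psi> (\<chi> k. if k = i then 0 else t $ k / (1 - t $ i))"
    using Psi tI by (simp add: Psi_sc_def)
  have ti: "1 - t $ i = R / S" using Spos S
    by (simp add: tk qk field_simps)
  have vec: "(\<chi> k. if k = i then 0 else t $ k / (1 - t $ i)) = nrm q0"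
    unfolding ti using Spos Rpos
    by (simp add: vec_eq_iff tk n0k qk q0k)
  have "phi \<psi> q0 = R * \<psi> (nrm q0)" using q0ne R0 by (simp add: phi_nrm)
  also have "\<dots> = S * ((1 - t $ i) * \<psi> (nrm q0))" using ti Spos by simp
  also have "\<dots> \<le> S * \<psi> t" using B2 vec Spos by simp
  also have "\<dots> = phi \<psi> q" using qne by (simp add: phi_nrm S_def t_def)
  finally show ?thesis by (simp add: q_def q0_def)
qed


lemma g0_lt:
  assumes a: "a \<in> Pos" and u: "u > 0"
  shows "phi \<psi> (upd a i 0) < phi \<psi> (upd a i u)"
proof (cases "\<forall>j. j \<noteq> i \<longrightarrow> a $ j = 0")
  case True
  hence "upd a i s = upd 0 i s" for s by (auto simp: vec_eq_iff upd_comp)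
  thus ?thesis using phi_vertex u by simp
next
  case False
  then obtain j where j: "j \<noteq> i" "a $ j \<noteq> 0" by blast
  hence j': "a $ j > 0" using a by (auto simp: Pos_def less_le)
  define R where "R = (\<Sum>k\<in>UNIV-{i}. a $ k)"
  have qP: "upd a i u \<in> Pos" "upd a i 0 \<in> Pos" using a u by (auto intro: upd_Pos)
  have "upd a i 0 $ j \<le> R" using sum_ge_comp[OF qP(2), of j] by (simp add: R_def sum_upd)
  hence Rpos: "R > 0" using j' j by (simp add: upd_comp)
  have ne: "upd a i u \<noteq> 0" "upd a i 0 \<noteq> 0" using j by (auto simp: vec_eq_iff upd_comp)
  have s1: "(\<Sum>k\<in>UNIV. upd a i u $ k) = u + R" by (simp add: sum_upd R_def)
  have s0: "(\<Sum>k\<in>UNIV. upd a i 0 $ k) = R" by (simp add: sum_upd R_def)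
  have "nrm (upd a i u) $ j \<noteq> nrm (upd a i 0) $ j"
    unfolding nrm_def vec_lambda_beta s1 s0
    using j j' Rpos u by (simp add: upd_comp)
  hence nne: "nrm (upd a i u) \<noteq> nrm (upd a i 0)" by auto
  have mid: "upd a i (u/2) = (1/2) *\<^sub>R upd a i u + (1/2) *\<^sub>R upd a i 0"
    by (auto simp: vec_eq_iff upd_comp)
  have "phi \<psi> (upd a i (u/2)) < (1/2) * phi \<psi> (upd a i u) + (1/2) * phi \<psi> (upd a i 0)"
    unfolding mid using phi_mid_strict[OF Psi qP ne nne] .
  moreover have "phi \<psi> (upd a i 0) \<le> phi \<psi> (upd a i (u/2))"
    using B2le[OF a _ j(1) j'] u by simp
  ultimately show ?thesis by linarith
qed

lemma coord_strict:
  assumes a: "a \<in> Pos" and s: "0 \<le> s" "s < u"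
  shows "phi \<psi> (upd a i s) < phi \<psi> (upd a i u)"
proof -
  have u: "u > 0" using s by linarith
  define l where "l = s / u"
  have l: "0 \<le> l" "l < 1" using s u by (auto simp: l_def)
  have eq: "upd a i s = l *\<^sub>R upd a i u + (1-l) *\<^sub>R upd a i 0"
    using u by (auto simp: vec_eq_iff upd_comp l_def algebra_simps)
  have qP: "upd a i u \<in> Pos" "upd a i 0 \<in> Pos" using a u by (auto intro: upd_Pos)
  have c: "phi \<psi> (upd a i s) \<le> l * phi \<psi> (upd a i u) + (1-l) * phi \<psi> (upd a i 0)"
    unfolding eq using phi_convex[OF Psi qP, of l] l by simp
  have lt: "phi \<psi> (upd a i 0) < phi \<psi> (upd a i u)" using g0_lt[OF a u] .
  have "(1-l) * phi \<psi> (upd a i 0) < (1-l) * phi \<psi> (upd a i u)"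
    using lt l by (intro mult_strict_left_mono) auto
  thus ?thesis using c by (simp add: algebra_simps)
qed

lemma upd_same[simp]: "upd a i (a $ i) = a"
  by (simp add: vec_eq_iff upd_comp)

lemma phi_mono_aux:
  assumes "finite S"
  shows "\<And>a b. a \<in> Pos \<Longrightarrow> b \<in> Pos \<Longrightarrow> (\<forall>k. a $ k \<le> b $ k) \<Longrightarrow> (\<forall>k. k \<notin> S \<longrightarrow> a $ k = b $ k)
     \<Longrightarrow> phi \<psi> a \<le> phi \<psi> b"
  using assms
proof (induction S rule: finite_induct)
  case empty
  hence "a = b" by (simp add: vec_eq_iff)
  thus ?case by simp
next
  case (insert i S)
  define m where "m = upd a i (b $ i)"
  have mP: "m \<in> Pos" using insert.prems by (auto simp: m_def Pos_def upd_comp)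
  have "phi \<psi> a \<le> phi \<psi> m"
  proof (cases "a $ i = b $ i")
    case True then show ?thesis by (simp add: m_def True[symmetric])
  next
    case False
    hence "a $ i < b $ i" using insert.prems(3) by (meson order_le_less)
    hence "phi \<psi> (upd a i (a $ i)) < phi \<psi> (upd a i (b $ i))"
      using insert.prems(1) by (intro coord_strict) (auto simp: Pos_def)
    thus ?thesis by (simp add: m_def)
  qed
  also have "phi \<psi> m \<le> phi \<psi> b"
    using insert.IH[OF mP insert.prems(2)] insert.prems(3,4)
    by (auto simp: m_def upd_comp)
  finally show ?case .
qed

lemma phi_mono:
  assumes "a \<in> Pos" "b \<in> Pos" "\<forall>k. a $ k \<le> b $ k" shows "phi \<psi> a \<le> phi \<psi> b"
  using phi_mono_aux[of UNIV a b] assms by simp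

lemma phi_strict_mono:
  assumes "c \<in> Pos" "a \<in> Pos" "\<forall>k. c $ k \<le> a $ k" "c \<noteq> a"
  shows "phi \<psi> c < phi \<psi> a"
proof -
  obtain i where i: "c $ i \<noteq> a $ i" using assms(4) by (auto simp: vec_eq_iff)
  hence lt: "c $ i < a $ i" using assms(3) by (meson order_le_less)
  have "phi \<psi> c \<le> phi \<psi> (upd a i (c $ i))"
    using assms by (intro phi_mono) (auto simp: upd_comp Pos_def)
  also have "\<dots> < phi \<psi> (upd a i (a $ i))"
    using assms lt by (intro coord_strict) (auto simp: Pos_def)
  finally show ?thesis by simp
qed

lemma phi_pos:
  assumes "a \<in> Pos" "a \<noteq> 0" shows "phi \<psi> a > 0"
proof -
  have "0 \<in> Pos" by (simp add: Pos_def)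
  have "phi \<psi> 0 < phi \<psi> a" using phi_strict_mono[OF \<open>0 \<in> Pos\<close> assms(1)] assms
    by (auto simp: Pos_def)
  thus ?thesis by simp
qed


lemma phi_nv_vertex: "phi \<psi> (nv (\<chi> j. if j = i then v else (0::'a::real_normed_vector))) = norm v"
proof -
  have "nv (\<chi> j. if j = i then v else (0::'a)) = upd 0 i (norm v)"
    by (simp add: nv_def upd_def vec_eq_iff)
  thus ?thesis using phi_vertex by simp
qed

lemma rev_dir:
  assumes scn: "strictly_convex_norm (norm :: 'a::real_normed_vector \<Rightarrow> real)"
  shows "(psi_norm \<psi> :: 'a ^ 'n \<Rightarrow> real) \<in> N_sc"
proof -
  let ?N = "psi_norm \<psi> :: 'a ^ 'n \<Rightarrow> real"
  have N: "?N x = phi \<psi> (nv x)" for x by (simp add: psi_norm_phi)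
  have z: "?N x = 0 \<longleftrightarrow> x = 0" for x
    using phi_pos[OF nv_Pos, of x] nv_zero_iff[of x] by (auto simp: N)
  have nvs: "nv (c *\<^sub>R x) = \<bar>c\<bar> *\<^sub>R nv x" for c and x :: "'a^'n"
    by (simp add: nv_def vec_eq_iff)
  have h: "?N (c *\<^sub>R x) = \<bar>c\<bar> * ?N x" for c x
    by (simp add: N nvs phi_homog)
  have nvt: "\<forall>k. nv (x + y) $ k \<le> (nv x + nv y) $ k" for x y :: "'a^'n"
    by (simp add: nv_def norm_triangle_ineq)
  have tri: "?N (x + y) \<le> ?N x + ?N y" for x y
  proof -
    have "phi \<psi> (nv (x+y)) \<le> phi \<psi> (nv x + nv y)"
      by (rule phi_mono[OF nv_Pos Pos_add[OF nv_Pos nv_Pos] nvt])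
    also have "\<dots> \<le> phi \<psi> (nv x) + phi \<psi> (nv y)" by (rule phi_add[OF Psi nv_Pos nv_Pos])
    finally show ?thesis by (simp add: N)
  qed
  have isn: "is_norm ?N" unfolding is_norm_def using z h tri by blast
  have A1: "?N (\<chi> i. \<epsilon> i *\<^sub>R (x $ i)) = ?N x" if "\<forall>i. \<epsilon> i = 1 \<or> \<epsilon> i = -1" for x \<epsilon>
  proof -
    have "nv (\<chi> i. \<epsilon> i *\<^sub>R (x $ i)) = nv x" using that
      by (auto simp: nv_def vec_eq_iff) (metis abs_minus_cancel abs_one)
    thus ?thesis by (simp add: N)
  qed
  have A2: "?N (\<chi> j. if j = i then v else 0) = norm v" for i v
    by (simp add: N phi_nv_vertex)
  have sc: "strictly_convex_norm ?N"
    unfolding strictly_convex_norm_def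
  proof (intro allI impI)
    fix x y :: "'a^'n"
    assume xy: "?N x = 1 \<and> ?N y = 1 \<and> x \<noteq> y"
    define a where "a = nv x"
    define b where "b = nv y"
    define c where "c = nv ((1/2) *\<^sub>R (x + y))"
    have P: "a \<in> Pos" "b \<in> Pos" "c \<in> Pos" by (auto simp: a_def b_def c_def nv_Pos)
    have pa: "phi \<psi> a = 1" "phi \<psi> b = 1" using xy by (auto simp: a_def b_def N)
    have ane: "a \<noteq> 0" "b \<noteq> 0" using pa by auto
    have cle: "\<forall>k. c $ k \<le> ((1/2) *\<^sub>R a + (1 - 1/2) *\<^sub>R b) $ k"
      by (simp add: a_def b_def c_def nv_def norm_triangle_ineq flip: distrib_left)
    have mP: "(1/2) *\<^sub>R a + (1 - 1/2) *\<^sub>R b \<in> Pos"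
      using P by (auto simp: Pos_def)
    have cv: "phi \<psi> c \<le> 1"
    proof -
      have "phi \<psi> c \<le> phi \<psi> ((1/2) *\<^sub>R a + (1 - 1/2) *\<^sub>R b)" by (rule phi_mono[OF P(3) mP cle])
      also have "\<dots> \<le> (1/2) * phi \<psi> a + (1 - 1/2) * phi \<psi> b"
        by (rule phi_convex[OF Psi P(1,2)]) auto
      finally show ?thesis using pa by simp
    qed
    show "?N ((1/2) *\<^sub>R (x + y)) < 1"
    proof (rule ccontr)
      assume "\<not> ?N ((1/2) *\<^sub>R (x + y)) < 1"
      hence pc: "phi \<psi> c = 1" using cv by (simp add: N c_def)
      have na: "nrm a = nrm b"
      proof (rule ccontr)
        assume "nrm a \<noteq> nrm b"
        hence "phi \<psi> ((1/2) *\<^sub>R a + (1/2) *\<^sub>R b) < (1/2) * phi \<psi> a + (1/2) * phi \<psi> b"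
          using phi_mid_strict[OF Psi P(1,2) ane] by blast
        moreover have "phi \<psi> c \<le> phi \<psi> ((1/2) *\<^sub>R a + (1/2) *\<^sub>R b)"
          using phi_mono[OF P(3) mP cle] by simp
        ultimately show False using pa pc by simp
      qed
      define A where "A = (\<Sum>j\<in>UNIV. a $ j)"
      define B where "B = (\<Sum>j\<in>UNIV. b $ j)"
      have A: "A > 0" unfolding A_def using Pos_ne0_sum_pos P ane by blast
      have B: "B > 0" unfolding B_def using Pos_ne0_sum_pos P ane by blast
      have "A * \<psi> (nrm a) = 1" "B * \<psi> (nrm a) = 1"
        using pa ane na by (auto simp: phi_nrm A_def B_def)
      hence AB: "A = B" by (metis mult_cancel_right mult_zero_left zero_neq_one)
      have ea: "a = A *\<^sub>R nrm a" using A by (simp add: vec_eq_iff nrm_def A_def)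
      have eb: "b = B *\<^sub>R nrm b" using B by (simp add: vec_eq_iff nrm_def B_def)
      have ab: "a = b" using ea eb AB na by simp
      have cle2: "\<forall>k. c $ k \<le> a $ k" using cle ab by (simp add: scaleR_left_distrib[symmetric])
      have ca: "c = a"
      proof (rule ccontr)
        assume "c \<noteq> a"
        hence "phi \<psi> c < phi \<psi> a" using phi_strict_mono[OF P(3) P(1) cle2] by blast
        thus False using pa pc by simp
      qed
      have "x $ k = y $ k" for k
      proof -
        have e1: "norm (x $ k) = norm (y $ k)" using ab by (simp add: a_def b_def nv_def vec_eq_iff)
        have e2: "norm ((1/2) *\<^sub>R (x $ k + y $ k)) = norm (x $ k)"
          using ca by (simp add: a_def c_def nv_def vec_eq_iff)
        show ?thesis
        proof (cases "norm (x $ k) = 0")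
          case True thus ?thesis using e1 by simp
        next
          case False
          define r where "r = norm (x $ k)"
          have r: "r > 0" using False by (simp add: r_def)
          have "norm ((1/r) *\<^sub>R x $ k) = 1" "norm ((1/r) *\<^sub>R y $ k) = 1"
            using r e1 by (auto simp: r_def)
          moreover have m1: "norm ((1/2) *\<^sub>R ((1/r) *\<^sub>R x $ k + (1/r) *\<^sub>R y $ k)) = 1"
          proof -
            have "(1/2) *\<^sub>R ((1/r) *\<^sub>R x $ k + (1/r) *\<^sub>R y $ k) = (1/r) *\<^sub>R ((1/2) *\<^sub>R (x $ k + y $ k))"
              by (simp add: algebra_simps)
            thus ?thesis using e2 r by (simp add: r_def)
          qed
          ultimately have "(1/r) *\<^sub>R x $ k = (1/r) *\<^sub>R y $ k"
          proof (rule_tac ccontr)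
            assume u: "norm ((1/r) *\<^sub>R x $ k) = 1" "norm ((1/r) *\<^sub>R y $ k) = 1" and
              "norm ((1/2) *\<^sub>R ((1/r) *\<^sub>R x $ k + (1/r) *\<^sub>R y $ k)) = 1"
              and ne: "(1/r) *\<^sub>R x $ k \<noteq> (1/r) *\<^sub>R y $ k"
            have "norm ((1/2) *\<^sub>R ((1/r) *\<^sub>R x $ k + (1/r) *\<^sub>R y $ k)) < 1"
              using scn u ne unfolding strictly_convex_norm_def by blast
            thus False using m1 by simp
          qed
          thus ?thesis using r by simp
        qed
      qed
      hence "x = y" by (simp add: vec_eq_iff)
      thus False using xy by simp
    qed
  qed
  show ?thesis unfolding N_sc_def using isn sc A1 A2 by blast
qed

end


section \<open>Generic facts on norms\<close>

lemma isn_0: "is_norm N \<Longrightarrow> N 0 = 0"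
  unfolding is_norm_def by metis

lemma isn_h: "is_norm N \<Longrightarrow> N (c *\<^sub>R x) = \<bar>c\<bar> * N x"
  unfolding is_norm_def by metis

lemma isn_tri: "is_norm N \<Longrightarrow> N (x + y) \<le> N x + N y"
  unfolding is_norm_def by metis

lemma isn_nonneg: assumes "is_norm N" shows "N x \<ge> 0"
proof -
  have "N (x + (-1) *\<^sub>R x) \<le> N x + N ((-1) *\<^sub>R x)" using isn_tri[OF assms] .
  thus ?thesis using isn_h[OF assms, of "-1" x] isn_0[OF assms] by simp
qed

lemma isn_pos: "is_norm N \<Longrightarrow> x \<noteq> 0 \<Longrightarrow> N x > 0"
  using isn_nonneg[of N x] unfolding is_norm_def by (metis less_le)

lemma isn_conv:
  assumes "is_norm N" "0 \<le> l" "l \<le> 1"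
  shows "N (l *\<^sub>R p + (1-l) *\<^sub>R q) \<le> l * N p + (1-l) * N q"
  using isn_tri[OF assms(1), of "l *\<^sub>R p" "(1-l) *\<^sub>R q"] isn_h[OF assms(1)] assms(2,3)
  by simp

lemma sc_seg:
  assumes N: "is_norm N" and sc: "strictly_convex_norm N"
    and ab: "N a = 1" "N b = 1" "a \<noteq> b" and l: "0 < l" "l < 1"
  shows "N (l *\<^sub>R a + (1-l) *\<^sub>R b) < 1"
proof -
  define m where "m = (1/2) *\<^sub>R (a + b)"
  have m: "N m < 1" using sc ab unfolding strictly_convex_norm_def m_def by blast
  show ?thesis
  proof (cases "l \<le> 1/2")
    case True
    have "l *\<^sub>R a + (1-l) *\<^sub>R b = (2*l) *\<^sub>R m + (1 - 2*l) *\<^sub>R b"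
      by (simp add: m_def algebra_simps) (metis scaleR_2 scaleR_add_right scaleR_scaleR mult.commute)
    moreover have "N ((2*l) *\<^sub>R m + (1 - 2*l) *\<^sub>R b) \<le> (2*l) * N m + (1 - 2*l) * N b"
      using isn_conv[OF N, of "2*l"] True l by simp
    moreover have "(2*l) * N m < (2*l) * 1" using m l by simp
    ultimately show ?thesis using ab by simp
  next
    case False
    have "l *\<^sub>R a + (1-l) *\<^sub>R b = (2 - 2*l) *\<^sub>R m + (1 - (2 - 2*l)) *\<^sub>R a"
      by (simp add: m_def algebra_simps) (metis scaleR_2 scaleR_add_right scaleR_scaleR mult.commute)
    moreover have "N ((2 - 2*l) *\<^sub>R m + (1 - (2 - 2*l)) *\<^sub>R a) \<le> (2 - 2*l) * N m + (1 - (2 - 2*l)) * N a"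
      using isn_conv[OF N, of "2 - 2*l"] False l by simp
    moreover have "(2 - 2*l) * N m < (2 - 2*l) * 1" using m l by simp
    ultimately show ?thesis using ab by simp
  qed
qed

lemma sc_strict:
  assumes N: "is_norm N" and sc: "strictly_convex_norm N"
    and pq: "p \<noteq> 0" "q \<noteq> 0" "(1 / N p) *\<^sub>R p \<noteq> (1 / N q) *\<^sub>R q" and l: "0 < l" "l < 1"
  shows "N (l *\<^sub>R p + (1-l) *\<^sub>R q) < l * N p + (1-l) * N q"
proof -
  define \<alpha> where "\<alpha> = N p"
  define \<beta> where "\<beta> = N q"
  have \<alpha>: "\<alpha> > 0" using isn_pos[OF N pq(1)] by (simp add: \<alpha>_def)
  have \<beta>: "\<beta> > 0" using isn_pos[OF N pq(2)] by (simp add: \<beta>_def)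
  define D where "D = l * \<alpha> + (1-l) * \<beta>"
  have D: "D > 0" using \<alpha> \<beta> l by (simp add: D_def add_pos_pos)
  define \<mu> where "\<mu> = l * \<alpha> / D"
  have \<mu>: "0 < \<mu>" "\<mu> < 1" using \<alpha> \<beta> l D by (auto simp: \<mu>_def D_def field_simps)
  have \<mu>1: "1 - \<mu> = (1-l) * \<beta> / D" using D by (simp add: \<mu>_def D_def field_simps)
  have eq: "l *\<^sub>R p + (1-l) *\<^sub>R q = D *\<^sub>R (\<mu> *\<^sub>R ((1/\<alpha>) *\<^sub>R p) + (1-\<mu>) *\<^sub>R ((1/\<beta>) *\<^sub>R q))"
    unfolding \<mu>1 using D \<alpha> \<beta> by (simp add: \<mu>_def scaleR_add_right)
  have u: "N ((1/\<alpha>) *\<^sub>R p) = 1" "N ((1/\<beta>) *\<^sub>R q) = 1"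
    using isn_h[OF N] \<alpha> \<beta> by (auto simp: \<alpha>_def \<beta>_def)
  have "N (\<mu> *\<^sub>R ((1/\<alpha>) *\<^sub>R p) + (1-\<mu>) *\<^sub>R ((1/\<beta>) *\<^sub>R q)) < 1"
    by (rule sc_seg[OF N sc u _ \<mu>]) (use pq(3) in \<open>simp add: \<alpha>_def \<beta>_def\<close>)
  hence "N (l *\<^sub>R p + (1-l) *\<^sub>R q) < D" unfolding eq isn_h[OF N] using D by simp
  thus ?thesis by (simp add: D_def \<alpha>_def \<beta>_def)
qed


definition emb :: "'a::real_vector \<Rightarrow> real ^ 'n \<Rightarrow> 'a ^ 'n" where
  "emb v t = (\<chi> i. t $ i *\<^sub>R v)"

lemma emb_add: "emb v (a + b) = emb v a + emb v b"
  by (simp add: emb_def vec_eq_iff scaleR_add_left)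
lemma emb_scale: "emb v (c *\<^sub>R a) = c *\<^sub>R emb v a"
  by (simp add: emb_def vec_eq_iff)
lemma emb_inj: "v \<noteq> 0 \<Longrightarrow> emb v s = emb v t \<Longrightarrow> s = t"
  by (simp add: emb_def vec_eq_iff)

lemma Omega_sum: "t \<in> Omega \<Longrightarrow> (\<Sum>i\<in>UNIV. t $ i) = 1"
  by (simp add: Omega_def)
lemma Omega_ne0: "t \<in> Omega \<Longrightarrow> t \<noteq> 0"
  using Omega_sum by fastforce
lemma Omega_conv:
  assumes "s \<in> Omega" "t \<in> Omega" "0 \<le> l" "l \<le> 1"
  shows "l *\<^sub>R s + (1-l) *\<^sub>R t \<in> Omega"
proof -
  have "(\<Sum>i\<in>UNIV. (l *\<^sub>R s + (1-l) *\<^sub>R t) $ i) = l * (\<Sum>i\<in>UNIV. s $ i) + (1-l) * (\<Sum>i\<in>UNIV. t $ i)"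
    by (simp add: sum.distrib sum_distrib_left)
  thus ?thesis using assms by (auto simp: Omega_def)
qed

lemma fwd:
  fixes N :: "'a::real_normed_vector ^ 'n \<Rightarrow> real" and \<psi> :: "real ^ 'n \<Rightarrow> real"
  assumes NS: "N \<in> N_sc" and v: "norm v = 1" and rep: "\<forall>t\<in>Omega. \<psi> t = N (emb v t)"
  shows "\<psi> \<in> Psi_sc \<and> strictly_convex_norm (norm::'a\<Rightarrow>real)"
proof -
  have isn: "is_norm N" and sc: "strictly_convex_norm N"
    and A1: "\<And>x (\<epsilon>::'n \<Rightarrow> real). (\<forall>i. \<epsilon> i = 1 \<or> \<epsilon> i = -1) \<Longrightarrow> N (\<chi> i. \<epsilon> i *\<^sub>R (x $ i)) = N x"
    and A2: "\<And>i (w::'a). N (\<chi> j. if j = i then w else 0) = norm w"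
    using NS unfolding N_sc_def by auto
  have v0: "v \<noteq> 0" using v by auto
  have cvx: "convex_on UNIV (\<lambda>t. N (emb v t))"
  proof (rule convex_onI)
    fix u x y :: "real ^ 'n" and t :: real
    assume t: "0 < t" "t < 1"
    have "emb v ((1 - t) *\<^sub>R x + t *\<^sub>R y) = (1-t) *\<^sub>R emb v x + (1 - (1-t)) *\<^sub>R emb v y"
      by (simp add: emb_add emb_scale)
    moreover have "N ((1-t) *\<^sub>R emb v x + (1 - (1-t)) *\<^sub>R emb v y) \<le> (1-t) * N (emb v x) + (1 - (1-t)) * N (emb v y)"
      using isn_conv[OF isn, of "1-t"] t by simp
    ultimately show "N (emb v ((1 - t) *\<^sub>R x + t *\<^sub>R y)) \<le> (1 - t) * N (emb v x) + t * N (emb v y)"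
      by simp
  qed simp
  have "continuous_on UNIV (\<lambda>t. N (emb v t))"
    by (rule convex_on_continuous[OF open_UNIV cvx])
  hence "continuous_on Omega (\<lambda>t. N (emb v t))" by (rule continuous_on_subset) simp
  hence cont: "continuous_on Omega \<psi>" using continuous_on_cong rep by force
  have strict: "strictly_convex_on_fn Omega \<psi>"
    unfolding strictly_convex_on_fn_def
  proof (intro ballI allI impI)
    fix s t :: "real ^ 'n" and l :: real
    assume st: "s \<in> Omega" "t \<in> Omega" and h: "s \<noteq> t \<and> 0 < l \<and> l < 1"
    have inO: "l *\<^sub>R s + (1-l) *\<^sub>R t \<in> Omega" using Omega_conv[OF st, of l] h by simp
    have ne: "emb v s \<noteq> 0" "emb v t \<noteq> 0"
      using emb_inj[OF v0, of s 0] emb_inj[OF v0, of t 0] Omega_ne0 st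
      by (auto simp: emb_scale[of v 0 s, simplified] emb_scale[of v 0 t, simplified])
    define \<alpha> where "\<alpha> = N (emb v s)"
    define \<beta> where "\<beta> = N (emb v t)"
    have \<alpha>: "\<alpha> > 0" using isn_pos[OF isn ne(1)] by (simp add: \<alpha>_def)
    have \<beta>: "\<beta> > 0" using isn_pos[OF isn ne(2)] by (simp add: \<beta>_def)
    have dif: "(1 / N (emb v s)) *\<^sub>R emb v s \<noteq> (1 / N (emb v t)) *\<^sub>R emb v t"
    proof
      assume "(1 / N (emb v s)) *\<^sub>R emb v s = (1 / N (emb v t)) *\<^sub>R emb v t"
      hence "emb v ((1/\<alpha>) *\<^sub>R s) = emb v ((1/\<beta>) *\<^sub>R t)" by (simp add: emb_scale \<alpha>_def \<beta>_def)
      hence e: "(1/\<alpha>) *\<^sub>R s = (1/\<beta>) *\<^sub>R t" by (rule emb_inj[OF v0])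
      hence "(\<Sum>i\<in>UNIV. ((1/\<alpha>) *\<^sub>R s) $ i) = (\<Sum>i\<in>UNIV. ((1/\<beta>) *\<^sub>R t) $ i)" by simp
      hence "1/\<alpha> = 1/\<beta>" using Omega_sum[OF st(1)] Omega_sum[OF st(2)] by (simp add: sum_divide_distrib[symmetric])
      hence "\<alpha> = \<beta>" by simp
      with e \<alpha> have "s = t" by simp
      thus False using h by simp
    qed
    have "\<psi> (l *\<^sub>R s + (1-l) *\<^sub>R t) = N (l *\<^sub>R emb v s + (1-l) *\<^sub>R emb v t)"
      using rep inO by (simp add: emb_add emb_scale)
    also have "\<dots> < l * N (emb v s) + (1-l) * N (emb v t)"
      using sc_strict[OF isn sc ne dif] h by simp
    also have "\<dots> = l * \<psi> s + (1-l) * \<psi> t" using rep st by simp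
    finally show "\<psi> (l *\<^sub>R s + (1-l) *\<^sub>R t) < l * \<psi> s + (1-l) * \<psi> t" .
  qed
  have B1: "\<psi> (\<chi> j. if j = i then 1 else 0) = 1" for i
  proof -
    have "(\<chi> j. if j = i then (1::real) else 0) \<in> Omega" by (simp add: Omega_def)
    moreover have "emb v (\<chi> j. if j = i then (1::real) else 0) = (\<chi> j. if j = i then v else 0)"
      by (simp add: emb_def vec_eq_iff)
    ultimately show ?thesis using rep A2 v by simp
  qed
  have B2: "\<psi> t \<ge> (1 - t $ i) * \<psi> (\<chi> j. if j = i then 0 else t $ j / (1 - t $ i))"
    if tI: "t \<in> Omega_int" for t i
  proof -
    have tO: "t \<in> Omega" and ti: "t $ i < 1" using tI by (auto simp: Omega_int_def)
    have t0: "\<forall>j. t $ j \<ge> 0" using tO by (simp add: Omega_def)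
    define t0 where "t0 = upd t i 0"
    define c where "c = 1 - t $ i"
    have c: "c > 0" using ti by (simp add: c_def)
    have "(\<Sum>j\<in>UNIV. t $ j) = t $ i + (\<Sum>j\<in>UNIV-{i}. t $ j)" by (rule sum.remove) auto
    hence sumt0: "(\<Sum>j\<in>UNIV. t0 $ j) = c" using Omega_sum[OF tO] by (simp add: t0_def sum_upd c_def)
    define w where "w = (\<chi> j. if j = i then 0 else t $ j / (1 - t $ i))"
    have wt: "t0 = c *\<^sub>R w" using c by (simp add: vec_eq_iff w_def t0_def upd_comp c_def)
    have wO: "w \<in> Omega"
    proof -
      have "(\<Sum>j\<in>UNIV. w $ j) = (1/c) * (\<Sum>j\<in>UNIV. t0 $ j)"
        using wt c by (simp add: sum_distrib_left)
      thus ?thesis using sumt0 c t0 ti by (auto simp: Omega_def w_def c_def)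
    qed
    define p where "p = emb v t"
    define \<epsilon> where "\<epsilon> = (\<lambda>j::'n. if j = i then -1 else (1::real))"
    have fl: "N (\<chi> j. \<epsilon> j *\<^sub>R (p $ j)) = N p" by (rule A1) (simp add: \<epsilon>_def)
    have "emb v t0 = (1/2) *\<^sub>R p + (1 - 1/2) *\<^sub>R (\<chi> j. \<epsilon> j *\<^sub>R (p $ j))"
    proof -
      have hh: "(x/2) *\<^sub>R w + (x/2) *\<^sub>R w = x *\<^sub>R w" for x and w :: 'a
        by (metis scaleR_add_left field_sum_of_halves)
      show ?thesis by (simp add: vec_eq_iff emb_def t0_def upd_comp p_def \<epsilon>_def algebra_simps hh)
    qed
    hence "N (emb v t0) \<le> (1/2) * N p + (1 - 1/2) * N (\<chi> j. \<epsilon> j *\<^sub>R (p $ j))"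
      using isn_conv[OF isn, of "1/2"] by simp
    hence "N (emb v t0) \<le> N p" using fl by simp
    moreover have "N (emb v t0) = c * \<psi> w"
      using rep wO c by (simp add: wt emb_scale isn_h[OF isn])
    moreover have "N p = \<psi> t" using rep tO by (simp add: p_def)
    ultimately show ?thesis by (simp add: w_def c_def)
  qed
  have Psi: "\<psi> \<in> Psi_sc" unfolding Psi_sc_def using cont strict B1 B2 by blast
  have scn: "strictly_convex_norm (norm::'a\<Rightarrow>real)"
    unfolding strictly_convex_norm_def
  proof (intro allI impI)
    fix x y :: 'a
    assume xy: "norm x = 1 \<and> norm y = 1 \<and> x \<noteq> y"
    define i :: 'n where "i = undefined"
    define E :: "'a \<Rightarrow> 'a ^ 'n" where "E = (\<lambda>w. \<chi> j. if j = i then w else 0)"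
    have "N (E x) = 1" "N (E y) = 1" using A2 xy by (auto simp: E_def)
    moreover have "E x \<noteq> E y" using xy by (auto simp: E_def vec_eq_iff)
    ultimately have "N ((1/2) *\<^sub>R (E x + E y)) < 1" using sc unfolding strictly_convex_norm_def by blast
    moreover have "(1/2) *\<^sub>R (E x + E y) = E ((1/2) *\<^sub>R (x + y))" by (simp add: E_def vec_eq_iff)
    ultimately show "norm ((1/2) *\<^sub>R (x + y)) < 1" using A2 by (simp add: E_def)
  qed
  show ?thesis using Psi scn by blast
qed


theorem corollary2p13:
  fixes \<psi> :: "real ^ 'n \<Rightarrow> real"
  assumes "CARD('n) \<ge> 2"
    and "\<exists>v::'a::real_normed_vector. v \<noteq> 0"
  shows "((psi_norm \<psi> :: 'a ^ 'n \<Rightarrow> real) \<in> N_sc) \<longleftrightarrow>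
           (\<psi> \<in> Psi_sc \<and> strictly_convex_norm (norm :: 'a \<Rightarrow> real))"
proof
  assume N: "(psi_norm \<psi> :: 'a ^ 'n \<Rightarrow> real) \<in> N_sc"
  obtain v0 :: 'a where v0: "v0 \<noteq> 0" using assms(2) by blast
  define v where "v = (1 / norm v0) *\<^sub>R v0"
  have v: "norm v = 1" using v0 by (simp add: v_def)
  have rep: "\<forall>t\<in>Omega. \<psi> t = (psi_norm \<psi> :: 'a ^ 'n \<Rightarrow> real) (emb v t)"
  proof
    fix t :: "real ^ 'n" assume tO: "t \<in> Omega"
    have t0: "\<forall>j. t $ j \<ge> 0" using tO by (simp add: Omega_def)
    have "nv (emb v t) = t" using t0 v by (simp add: nv_def emb_def vec_eq_iff)
    moreover have "nrm t = t" using Omega_sum[OF tO] by (simp add: nrm_def vec_eq_iff)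
    ultimately show "\<psi> t = psi_norm \<psi> (emb v t)"
      using Omega_ne0[OF tO] Omega_sum[OF tO] by (simp add: psi_norm_phi phi_nrm)
  qed
  show "\<psi> \<in> Psi_sc \<and> strictly_convex_norm (norm :: 'a \<Rightarrow> real)"
    by (rule fwd[OF N v rep])
next
  assume "\<psi> \<in> Psi_sc \<and> strictly_convex_norm (norm :: 'a \<Rightarrow> real)"
  thus "(psi_norm \<psi> :: 'a ^ 'n \<Rightarrow> real) \<in> N_sc" using rev_dir by blast
qed

end
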